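(* Let $f(z)=z+\sum_{n=2}^{\infty}a_nz^n\in\mathcal{S}^{*}_{\rho}$. Then $$|H_{2,2}(f)|=|a_2a_4-a_3^2|\le \tfrac14 .$$ The bound is sharp, with equality for $f(z)=z\exp\Big(\int_0^z\frac{\sinh^{-1}(t^{2})}{t}\,dt\Big)=z+\frac{z^3}{2}+\frac{z^5}{8}-\cdots$.
   Context: Let $\mathbb{D}=\{z\in\mathbb{C}:|z|<1\}$. For analytic $g_1,g_2$ on $\mathbb{D}$, $g_1\prec g_2$ means there is an analytic $w:\mathbb{D}\to\mathbb{D}$ with $w(0)=0$ such that $g_1=g_2\circ w$. Here $\sinh^{-1}$ denotes the principal branch of the inverse hyperbolic sine with $\sinh^{-1}(0)=0$, analytic on $\mathbb{D}$. The class $\mathcal{S}^{*}_{\rho}$ consists of all univalent analytic functions $f$ on $\mathbb{D}$ with $f(z)=z+\sum_{n\ge2}a_nz^n$ such that $\frac{zf'(z)}{f(z)}\prec 1+\sinh^{-1}(z)$. *)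

theory Defs
  imports "HOL-Complex_Analysis.Complex_Analysis"
begin

definition subordinate :: "(complex \<Rightarrow> complex) \<Rightarrow> (complex \<Rightarrow> complex) \<Rightarrow> bool" where
  "subordinate g1 g2 \<longleftrightarrow>
     (\<exists>w. w holomorphic_on ball 0 1 \<and> w ` ball 0 1 \<subseteq> ball 0 1 \<and> w 0 = 0 \<and>
          (\<forall>z\<in>ball 0 1. g1 z = g2 (w z)))"

definition coeff :: "(complex \<Rightarrow> complex) \<Rightarrow> nat \<Rightarrow> complex" where
  "coeff f n = (deriv ^^ n) f 0 / of_nat (fact n)"

text \<open>z f'(z)/f(z), extended by its limit value 1 at z = 0 (for normalized f).\<close>
definition logderiv_quot :: "(complex \<Rightarrow> complex) \<Rightarrow> complex \<Rightarrow> complex" where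
  "logderiv_quot f z = (if z = 0 then 1 else z * deriv f z / f z)"

text \<open>The class S*_rho; arsinh on complex is the principal branch
  ln (z + (z^2+1) powr (1/2)) with principal ln and powr.\<close>
definition S_rho :: "(complex \<Rightarrow> complex) set" where
  "S_rho = {f. f holomorphic_on ball 0 1 \<and> inj_on f (ball 0 1) \<and> f 0 = 0 \<and> deriv f 0 = 1 \<and>
              subordinate (logderiv_quot f) (\<lambda>z. 1 + arsinh z)}"

end

theory Submission
  imports Defs
begin

lemma re_sq_pos: fixes z::complex assumes "norm z < 1" shows "Re (1 + z^2) > 0"
proof -
  have "Re (z^2) = (Re z)^2 - (Im z)^2" by (simp add: power2_eq_square)
  moreover have "(Re z)^2 + (Im z)^2 < 1" using assms by (simp add: cmod_def power2_eq_square)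
  ultimately show ?thesis by (simp add: power2_eq_square) (smt (verit) zero_le_square)
qed

lemma sq_ne: fixes z::complex assumes "norm z < 1" shows "1 + z^2 \<noteq> 0"
  using re_sq_pos[OF assms] by (metis less_irrefl zero_complex.sel(1))

definition sq :: "complex \<Rightarrow> complex" where "sq z = exp (Ln (1 + z^2) / 2)"

lemma sq_sq: "(sq z)^2 = 1 + z^2" if "1 + z^2 \<noteq> 0"
proof -
  have "(sq z)^2 = exp (Ln (1+z^2))" unfolding sq_def by (simp add: exp_double[symmetric] power2_eq_square exp_add[symmetric])
  then show ?thesis using that by simp
qed

lemma Re_sq_pos: fixes z::complex assumes "norm z < 1" shows "Re (sq z) > 0"
proof -
  have r: "Re (1 + z^2) > 0" using re_sq_pos[OF assms] .
  have "\<bar>Im (Ln (1+z^2))\<bar> < pi/2" using Re_Ln_pos_lt_imp[OF r] .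
  then have "cos (Im (Ln (1+z^2)) / 2) > 0" by (intro cos_gt_zero_pi) auto
  then show ?thesis unfolding sq_def by (simp add: Re_exp)
qed

lemma arsinh_eq: fixes z::complex assumes "norm z < 1" shows "arsinh z = Ln (z + sq z)"
proof -
  have ne: "z^2 + 1 \<noteq> 0" using sq_ne[OF assms] by (simp add: add.commute)
  show ?thesis unfolding arsinh_def sq_def powr_def using ne by (simp add: add.commute)
qed

lemma Re_y_pos: fixes z::complex assumes "norm z < 1" shows "Re (z + sq z) > 0"
proof -
  define s where "s = sq z"
  define y where "y = z + s"
  have ne: "1 + z^2 \<noteq> 0" using sq_ne[OF assms] .
  have s2: "s^2 = 1 + z^2" using sq_sq[OF ne] by (simp add: s_def)
  have "(s - z) * y = 1" using s2 by (simp add: y_def algebra_simps power2_eq_square)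
  then have y0: "y \<noteq> 0" by auto
  have sz: "s - z = inverse y" using \<open>(s - z) * y = 1\<close> y0 by (metis divide_inverse mult.commute nonzero_mult_div_cancel_left mult_1_right)
  have "2 * s = y + inverse y" using sz by (simp add: y_def algebra_simps)
  then have "Re (2 * s) = Re y + Re (inverse y)" by simp
  then have e: "2 * Re s = Re y + Re y / ((Re y)^2 + (Im y)^2)"
    by (simp add: Re_inverse power2_eq_square)
  have "Re s > 0" using Re_sq_pos[OF assms] by (simp add: s_def)
  have p: "(Re y)^2 + (Im y)^2 > 0" using y0 by (simp add: complex_eq_iff sum_power2_gt_zero_iff)
  have "Re y * (1 + 1/((Re y)^2 + (Im y)^2)) > 0" using e \<open>Re s > 0\<close> by (simp add: algebra_simps)
  moreover have "1 + 1/((Re y)^2 + (Im y)^2) > 0" using p by (simp add: add_pos_pos)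
  ultimately show ?thesis by (simp add: y_def s_def zero_less_mult_iff)
qed
lemma y_ne: fixes z::complex assumes "norm z < 1" shows "z + sq z \<noteq> 0"
  using Re_y_pos[OF assms] by (metis less_irrefl zero_complex.sel(1))

lemma notin_nonpos: fixes z::complex shows "Re z > 0 \<Longrightarrow> z \<notin> \<real>\<^sub>\<le>\<^sub>0"
  by (simp add: complex_nonpos_Reals_iff)

lemma sq_holo: "sq holomorphic_on ball 0 1"
  unfolding sq_def
  by (intro holomorphic_intros) (auto intro!: notin_nonpos re_sq_pos)

lemma arsinh_holo: "(arsinh :: complex \<Rightarrow> complex) holomorphic_on ball 0 1"
proof -
  have "(\<lambda>z. Ln (z + sq z)) holomorphic_on ball 0 1"
    by (intro holomorphic_intros sq_holo) (auto intro!: notin_nonpos Re_y_pos)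
  then show ?thesis by (rule holomorphic_transform) (simp add: arsinh_eq)
qed

lemma exp_arsinh: fixes z::complex assumes "norm z < 1"
  shows "exp (arsinh z) = z + sq z"
proof -
  have "z + sq z \<noteq> 0" using y_ne[OF assms] .
  then show ?thesis using arsinh_eq[OF assms] by simp
qed

lemma exp_arsinh_eq: fixes z::complex assumes "norm z < 1"
  shows "exp (arsinh z) * exp (arsinh z) - 2 * z * exp (arsinh z) - 1 = 0"
proof -
  have "(sq z)^2 = 1 + z^2" using sq_sq[OF sq_ne[OF assms]] .
  then show ?thesis unfolding exp_arsinh[OF assms] by (simp add: algebra_simps power2_eq_square)
qed

lemma Re_arsinh: fixes z::complex assumes "norm z < 1"
  shows "Re (1 + arsinh z) > 0"
proof -
  define y where "y = z + sq z"
  have y0: "y \<noteq> 0" using y_ne[OF assms] by (simp add: y_def)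
  have ey: "y * y - 2 * z * y - 1 = 0" using exp_arsinh_eq[OF assms] exp_arsinh[OF assms] by (simp add: y_def)
  then have "y * y - 1 = 2 * z * y" by (simp add: algebra_simps)
  then have e: "norm (y * y - 1) = 2 * norm z * norm y" by (simp add: norm_mult)
  have "norm (1::complex) - norm (y*y) \<le> norm (1 - y*y)" by (rule norm_triangle_ineq2)
  then have t: "norm (y*y - 1) \<ge> 1 - norm y * norm y"
    by (simp add: norm_mult norm_minus_commute)
  have "2 * norm z * norm y < 2 * norm y" using assms y0 by simp
  with e t have "1 - norm y * norm y < 2 * norm y" by linarith
  then have ny: "norm y > 2/5"
  proof -
    assume h: "1 - norm y * norm y < 2 * norm y"
    show ?thesis
    proof (rule ccontr)
      assume "\<not> norm y > 2/5"
      then have "norm y * norm y \<le> 2/5 * (2/5)" by (intro mult_mono) auto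
      with h \<open>\<not> norm y > 2/5\<close> show False by linarith
    qed
  qed
  have "exp (1::real) \<ge> 5/2" using exp_lower_Taylor_quadratic[of 1] by simp
  then have "exp (-1::real) \<le> 2/5" by (simp add: exp_minus field_simps)
  then have "exp (-1) < norm y" using ny by linarith
  then have "ln (exp (-1)) < ln (norm y)" using y0 by (subst ln_less_cancel_iff) auto
  then have "ln (norm y) > -1" by simp
  then show ?thesis using arsinh_eq[OF assms] y0 by (simp add: y_def)
qed

lemma fps_eq_from_fun:
  fixes f g :: "complex \<Rightarrow> complex"
  assumes "f has_fps_expansion F" "g has_fps_expansion G" "eventually (\<lambda>z. f z = g z) (nhds 0)"
  shows "F = G"
proof (rule fps_ext)
  fix n
  show "F $ n = G $ n" using fps_nth_fps_expansion[OF assms(1)] fps_nth_fps_expansion[OF assms(2)]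
      higher_deriv_cong_ev[OF assms(3) refl, of n] by simp
qed

lemma ev_ball: "eventually (\<lambda>z::complex. norm z < 1) (nhds 0)"
proof -
  have "eventually (\<lambda>z::complex. z \<in> ball 0 1) (nhds 0)" by (intro eventually_nhds_in_open) auto
  then show ?thesis by simp
qed

lemma hfe: "f holomorphic_on ball 0 1 \<Longrightarrow> f has_fps_expansion fps_expansion f 0"
  by (rule has_fps_expansion_fps_expansion) auto

lemma coeff_eq: "f has_fps_expansion F \<Longrightarrow> coeff f n = F $ n"
  by (simp add: coeff_def fps_nth_fps_expansion)

lemma fps_mult_nth_0: "fps_nth (f*g) 0 = fps_nth f 0 * fps_nth g 0"
  by (simp add: fps_mult_nth)
lemma fps_mult_nth_1: "fps_nth (f*g) 1 = fps_nth f 0 * fps_nth g 1 + fps_nth f 1 * fps_nth g 0"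
  by (simp add: fps_mult_nth)
lemma fps_mult_nth_2: "fps_nth (f*g) 2 = fps_nth f 0 * fps_nth g 2 + fps_nth f 1 * fps_nth g 1 + fps_nth f 2 * fps_nth g 0"
  by (simp add: fps_mult_nth numeral_2_eq_2 sum.atLeast0_atMost_Suc)
lemma fps_mult_nth_3: "fps_nth (f*g) 3 = fps_nth f 0 * fps_nth g 3 + fps_nth f 1 * fps_nth g 2 + fps_nth f 2 * fps_nth g 1 + fps_nth f 3 * fps_nth g 0"
  by (simp add: fps_mult_nth numeral_3_eq_3 numeral_2_eq_2 sum.atLeast0_atMost_Suc)
lemma fps_mult_nth_4: "fps_nth (f*g) 4 = fps_nth f 0 * fps_nth g 4 + fps_nth f 1 * fps_nth g 3 + fps_nth f 2 * fps_nth g 2 + fps_nth f 3 * fps_nth g 1 + fps_nth f 4 * fps_nth g 0"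
  by (simp add: fps_mult_nth eval_nat_numeral sum.atLeast0_atMost_Suc)

lemmas mnth = fps_mult_nth_0 fps_mult_nth_1 fps_mult_nth_2 fps_mult_nth_3 fps_mult_nth_4

lemma coeff_rel:
  fixes f w :: "complex \<Rightarrow> complex"
  assumes wh: "w holomorphic_on ball 0 1" and wb: "\<And>z. norm z < 1 \<Longrightarrow> norm (w z) < 1" and w0: "w 0 = 0"
    and fh: "f holomorphic_on ball 0 1" and f0: "f 0 = 0" and f1: "deriv f 0 = 1"
    and eq: "\<And>z. norm z < 1 \<Longrightarrow> z * deriv f z = f z * (1 + arsinh (w z))"
  shows "coeff f 2 = coeff w 1 \<and> coeff f 3 = ((coeff w 1)^2 + coeff w 2)/2
     \<and> coeff f 4 = (coeff w 1)^3/9 + coeff w 1 * coeff w 2/2 + coeff w 3/3"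
proof -
  define h where "h z = arsinh (w z)" for z
  define e where "e z = exp (h z)" for z
  have hh: "h holomorphic_on ball 0 1" unfolding h_def
    by (rule holomorphic_on_compose_gen[OF wh arsinh_holo, unfolded o_def]) (use wb in auto)
  have eh: "e holomorphic_on ball 0 1" unfolding e_def by (intro holomorphic_intros hh)
  define W where "W = fps_expansion w 0"
  define A where "A = fps_expansion h 0"
  define E where "E = fps_expansion e 0"
  define F where "F = fps_expansion f 0"
  have hW: "w has_fps_expansion W" unfolding W_def using wh by (rule hfe)
  have hA: "h has_fps_expansion A" unfolding A_def using hh by (rule hfe)
  have hE: "e has_fps_expansion E" unfolding E_def using eh by (rule hfe)
  have hF: "f has_fps_expansion F" unfolding F_def using fh by (rule hfe)
  have deq: "deriv e z = deriv h z * e z" if "norm z < 1" for z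
  proof -
    have "(h has_field_derivative deriv h z) (at z)"
      using hh that by (intro holomorphic_derivI[of _ "ball 0 1"]) auto
    then have "(e has_field_derivative exp (h z) * deriv h z) (at z)"
      unfolding e_def[abs_def] by (auto intro!: derivative_eq_intros)
    then show ?thesis by (simp add: DERIV_imp_deriv e_def)
  qed
  have E1: "E * E - 2 * (W * E) - 1 = 0"
  proof (rule fps_eq_from_fun)
    show "(\<lambda>z. e z * e z - 2 * (w z * e z) - 1) has_fps_expansion E * E - 2 * (W * E) - 1"
      by (intro fps_expansion_intros hE hW)
    show "(\<lambda>z. 0) has_fps_expansion 0" by simp
    show "eventually (\<lambda>z. e z * e z - 2 * (w z * e z) - 1 = 0) (nhds 0)"
      using ev_ball by eventually_elim (use exp_arsinh_eq wb in \<open>simp add: e_def h_def mult.assoc\<close>)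
  qed
  have E2: "fps_deriv E = fps_deriv A * E"
  proof (rule fps_eq_from_fun)
    show "deriv e has_fps_expansion fps_deriv E" by (intro fps_expansion_intros hE)
    show "(\<lambda>z. deriv h z * e z) has_fps_expansion fps_deriv A * E"
      by (intro fps_expansion_intros hE hA)
    show "eventually (\<lambda>z. deriv e z = deriv h z * e z) (nhds 0)"
      using ev_ball by eventually_elim (simp add: deq)
  qed
  have E3: "fps_X * fps_deriv F = F * (1 + A)"
  proof (rule fps_eq_from_fun)
    show "(\<lambda>z. z * deriv f z) has_fps_expansion fps_X * fps_deriv F" by (intro fps_expansion_intros hF)
    show "(\<lambda>z. f z * (1 + h z)) has_fps_expansion F * (1 + A)"
      by (intro fps_expansion_intros hF hA)
    show "eventually (\<lambda>z. z * deriv f z = f z * (1 + h z)) (nhds 0)"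
      using ev_ball by eventually_elim (simp add: eq h_def)
  qed
  have W0: "W $ 0 = 0" using fps_nth_fps_expansion[OF hW, of 0] w0 by simp
  have A0: "A $ 0 = 0" using fps_nth_fps_expansion[OF hA, of 0] w0 by (simp add: h_def)
  have Ez: "E $ 0 = 1" using fps_nth_fps_expansion[OF hE, of 0] w0 by (simp add: e_def h_def)
  have F0: "F $ 0 = 0" using fps_nth_fps_expansion[OF hF, of 0] f0 by simp
  have F1: "F $ 1 = 1" using fps_nth_fps_expansion[OF hF, of 1] f1 by simp
  have x1: "fps_nth (E*E) n - 2 * fps_nth (W*E) n = 0" if "n > 0" for n
    using arg_cong[OF E1, of "\<lambda>X. fps_nth X n"] that by simp
  have x2: "fps_nth (fps_deriv E) n = fps_nth (fps_deriv A * E) n" for n using E2 by simp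
  have x3: "fps_nth (fps_X * fps_deriv F) n = fps_nth (F * (1 + A)) n" for n using E3 by simp
  have p1: "fps_nth (1 + A) 0 = 1" "fps_nth (1+A) 1 = fps_nth A 1" "fps_nth (1+A) 2 = fps_nth A 2"
     "fps_nth (1+A) 3 = fps_nth A 3" "fps_nth (1+A) 4 = fps_nth A 4" using A0 by simp_all
  define c1 where "c1 = fps_nth W 1"
  define c2 where "c2 = fps_nth W 2"
  define c3 where "c3 = fps_nth W 3"
  have cs: "fps_nth W (Suc 0) = c1" "fps_nth W (Suc (Suc 0)) = c2" "fps_nth W (Suc (Suc (Suc 0))) = c3"
    "fps_nth W 0 = 0" "fps_nth E 0 = 1" "fps_nth A 0 = 0" "fps_nth F 0 = 0" "fps_nth F (Suc 0) = 1"
    using W0 Ez A0 F0 F1 by (simp_all add: c1_def c2_def c3_def eval_nat_numeral)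
  note ss = eval_nat_numeral One_nat_def
  have Ea: "fps_nth E (Suc 0) = c1" using x1[of 1] unfolding mnth by (simp add: ss cs)
  have Eb: "fps_nth E (Suc (Suc 0)) = c1^2/2 + c2" using x1[of 2] unfolding mnth by (simp add: ss cs Ea power2_eq_square field_simps)
  have Ec: "fps_nth E (Suc (Suc (Suc 0))) = c1*c2 + c3" using x1[of 3] unfolding mnth by (simp add: ss cs Ea Eb power2_eq_square field_simps) algebra
  have Aa: "fps_nth A (Suc 0) = c1" using x2[of 0] unfolding mnth by (simp add: ss cs Ea)
  have Ab: "fps_nth A (Suc (Suc 0)) = c2" using x2[of 1] unfolding mnth by (simp add: ss cs Ea Eb Aa power2_eq_square field_simps)
  have Ac: "fps_nth A (Suc (Suc (Suc 0))) = c3 - c1^3/6" using x2[of 2] unfolding mnth by (simp add: ss cs Ea Eb Ec Aa Ab power2_eq_square power3_eq_cube field_simps)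
  have Fa: "fps_nth F (Suc (Suc 0)) = c1" using x3[of 2] unfolding mnth p1 by (simp add: ss cs Aa)
  have Fb: "fps_nth F (Suc (Suc (Suc 0))) = (c1^2 + c2)/2" using x3[of 3] unfolding mnth p1 by (simp add: ss cs Aa Ab Fa power2_eq_square field_simps)
  have Fc: "fps_nth F (Suc (Suc (Suc (Suc 0)))) = c1^3/9 + c1*c2/2 + c3/3" using x3[of 4] unfolding mnth p1 by (simp add: ss cs Aa Ab Ac Fa Fb power2_eq_square power3_eq_cube field_simps) algebra
  show ?thesis using Fa Fb Fc coeff_eq[OF hF] coeff_eq[OF hW] by (simp add: c1_def c2_def c3_def ss)
qed

lemma mobius_lt:
  fixes a b :: complex assumes a: "norm a < 1" and b: "norm b < 1"
  shows "norm ((b - a) / (1 - cnj a * b)) < 1"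
proof -
  have "norm a * norm b \<le> norm a" using b by (simp add: mult_left_le)
  then have nab: "norm (cnj a * b) < 1" using a by (simp add: norm_mult)
  then have d0: "1 - cnj a * b \<noteq> 0" by auto
  have id: "(norm (1 - cnj a * b))^2 - (norm (b - a))^2 = (1 - (norm a)^2) * (1 - (norm b)^2)"
    unfolding cmod_power2 by (simp add: algebra_simps power2_eq_square)
  have "(1 - (norm a)^2) * (1 - (norm b)^2) > 0"
    using a b by (intro mult_pos_pos) (simp_all add: power_less_one_iff abs_square_less_1)
  then have "(norm (b - a))^2 < (norm (1 - cnj a * b))^2" using id by linarith
  then have "norm (b - a) < norm (1 - cnj a * b)"
    using power2_less_imp_less by fastforce
  then show ?thesis using d0 by (simp add: norm_divide divide_less_eq)
qed

lemma SP_strict: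
  fixes u :: "complex \<Rightarrow> complex"
  assumes uh: "u holomorphic_on ball 0 1" and ub: "\<And>z. norm z < 1 \<Longrightarrow> norm (u z) < 1"
  shows "norm (deriv u 0) \<le> 1 - (norm (u 0))^2"
proof -
  define a where "a = u 0"
  have a1: "norm a < 1" using ub[of 0] by (simp add: a_def)
  define v where "v z = (u z - a) / (1 - cnj a * u z)" for z
  have den: "1 - cnj a * u z \<noteq> 0" if "norm z < 1" for z
  proof -
    have "norm a * norm (u z) \<le> norm a" using ub[OF that] by (simp add: mult_left_le)
    then have "norm (cnj a * u z) < 1" using a1 by (simp add: norm_mult)
    then show ?thesis by auto
  qed
  have vh: "v holomorphic_on ball 0 1" unfolding v_def
    using den by (intro holomorphic_intros uh) auto
  have v0: "v 0 = 0" by (simp add: v_def a_def)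
  have vb: "norm (v z) < 1" if "norm z < 1" for z
    unfolding v_def using mobius_lt[OF a1 ub[OF that]] .
  have "norm (deriv v 0) \<le> 1"
    using Schwarz_Lemma(2)[OF vh v0 vb, of 0] by simp
  moreover have "deriv v 0 = deriv u 0 / (1 - cnj a * a)"
  proof -
    have du: "(u has_field_derivative deriv u 0) (at 0)"
      using uh by (intro holomorphic_derivI[of _ "ball 0 1"]) auto
    have "(v has_field_derivative ((deriv u 0 * (1 - cnj a * u 0) - (u 0 - a) * (- (cnj a * deriv u 0))) / (1 - cnj a * u 0)^2)) (at 0)"
      unfolding v_def[abs_def] using den[of 0]
      by (auto intro!: derivative_eq_intros du simp: power2_eq_square)
    then have "deriv v 0 = (deriv u 0 * (1 - cnj a * u 0) - (u 0 - a) * (- (cnj a * deriv u 0))) / (1 - cnj a * u 0)^2"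
      by (rule DERIV_imp_deriv)
    then show ?thesis using den[of 0] by (simp add: a_def power2_eq_square)
  qed
  moreover have "cnj a * a = of_real ((norm a)^2)"
    using complex_norm_square[of a] by (simp add: mult.commute)
  moreover have pos: "1 - (norm a)^2 > 0" using a1 by (simp add: abs_square_less_1)
  ultimately have "norm (deriv u 0 / of_real (1 - (norm a)^2)) \<le> 1" by (simp del: of_real_diff of_real_power add: of_real_diff[symmetric]) (simp add: of_real_diff)
  moreover have "norm (of_real (1 - (norm a)^2) :: complex) = 1 - (norm a)^2"
    using pos by (simp only: norm_of_real)
  ultimately have "norm (deriv u 0) / (1 - (norm a)^2) \<le> 1" by (simp only: norm_divide)
  then show ?thesis using pos by (simp add: a_def divide_le_eq)
qed

lemma SP_closed:
  fixes u :: "complex \<Rightarrow> complex"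
  assumes uh: "u holomorphic_on ball 0 1" and ub: "\<And>z. norm z < 1 \<Longrightarrow> norm (u z) \<le> 1"
  shows "norm (deriv u 0) \<le> 1 - (norm (u 0))^2 \<and>
     ((\<exists>z. norm z < 1 \<and> norm (u z) = 1) \<longrightarrow> (\<forall>z. norm z < 1 \<longrightarrow> u z = u 0))"
proof (cases "\<exists>z. norm z < 1 \<and> norm (u z) = 1")
  case True
  then obtain z0 where z0: "norm z0 < 1" "norm (u z0) = 1" by blast
  have "u constant_on ball 0 1"
    by (rule maximum_modulus_principle[OF uh open_ball connected_ball open_ball subset_refl, of z0])
       (use z0 ub in auto)
  then obtain c where c: "\<And>z. z \<in> ball 0 1 \<Longrightarrow> u z = c" by (auto simp: constant_on_def)
  have "deriv u 0 = deriv (\<lambda>_. c) 0"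
    by (rule deriv_cong_ev) (use ev_ball c in \<open>auto elim!: eventually_mono\<close>)
  then have "deriv u 0 = 0" by simp
  moreover have "u 0 = u z0" using c z0 by simp
  ultimately show ?thesis using c z0 by simp
next
  case False
  then have "norm (u z) < 1" if "norm z < 1" for z using ub[OF that] that by force
  then show ?thesis using SP_strict[OF uh] False by blast
qed

lemma schwarz_quot:
  fixes g :: "complex \<Rightarrow> complex"
  assumes gh: "g holomorphic_on ball 0 1" and g0: "g 0 = 0" and gb: "\<And>z. norm z < 1 \<Longrightarrow> norm (g z) < 1"
  obtains t where "t holomorphic_on ball 0 1" "\<And>z. norm z < 1 \<Longrightarrow> g z = z * t z"
    "\<And>z. norm z < 1 \<Longrightarrow> norm (t z) \<le> 1" "t 0 = deriv g 0"
proof -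
  obtain h where hh: "h holomorphic_on ball 0 1" and he: "\<And>z. norm z < 1 \<Longrightarrow> g z = z * h z"
    and hd: "deriv g 0 = h 0"
    using Schwarz3[OF gh g0] by blast
  have "norm (h z) \<le> 1" if z: "norm z < 1" for z
  proof (cases "z = 0")
    case True
    then show ?thesis using Schwarz_Lemma(2)[OF gh g0 gb, of 0] hd by simp
  next
    case False
    have "norm (g z) \<le> norm z" using Schwarz_Lemma(1)[OF gh g0 gb z] .
    then have "norm z * norm (h z) \<le> norm z * 1" using he[OF z] by (simp add: norm_mult)
    then show ?thesis using False by (simp add: mult_le_cancel_left1)
  qed
  then show ?thesis using that[OF hh he] hd by auto
qed

lemma coeff_shift:
  fixes g t :: "complex \<Rightarrow> complex"
  assumes gh: "g holomorphic_on ball 0 1" and th: "t holomorphic_on ball 0 1"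
    and e: "\<And>z. norm z < 1 \<Longrightarrow> g z = z * t z"
  shows "coeff g (Suc n) = coeff t n"
proof -
  have hg: "g has_fps_expansion fps_expansion g 0" using gh by (rule hfe)
  have ht: "t has_fps_expansion fps_expansion t 0" using th by (rule hfe)
  have "fps_expansion g 0 = fps_X * fps_expansion t 0"
  proof (rule fps_eq_from_fun[OF hg])
    show "(\<lambda>z. z * t z) has_fps_expansion fps_X * fps_expansion t 0"
      by (intro fps_expansion_intros ht)
    show "eventually (\<lambda>z. g z = z * t z) (nhds 0)"
      using ev_ball by eventually_elim (simp add: e)
  qed
  then show ?thesis using coeff_eq[OF hg] coeff_eq[OF ht] by simp
qed

lemma coeff_01: "coeff f 0 = f 0" "coeff f 1 = deriv f 0"
  by (simp_all add: coeff_def)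

lemma schwarz_quot_ex:
  fixes g :: "complex \<Rightarrow> complex"
  assumes gh: "g holomorphic_on ball 0 1" and g0: "g 0 = 0" and gb: "\<And>z. norm z < 1 \<Longrightarrow> norm (g z) < 1"
  shows "\<exists>t. t holomorphic_on ball 0 1 \<and> (\<forall>z. norm z < 1 \<longrightarrow> g z = z * t z) \<and>
    (\<forall>z. norm z < 1 \<longrightarrow> norm (t z) \<le> 1) \<and> t 0 = deriv g 0"
proof -
  obtain t where "t holomorphic_on ball 0 1" "\<And>z. norm z < 1 \<Longrightarrow> g z = z * t z"
    "\<And>z. norm z < 1 \<Longrightarrow> norm (t z) \<le> 1" "t 0 = deriv g 0"
    using schwarz_quot[OF gh g0 gb] by blast
  then show ?thesis by blast
qed

lemma coef_bounds:
  fixes w :: "complex \<Rightarrow> complex"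
  assumes wh: "w holomorphic_on ball 0 1" and wb: "\<And>z. norm z < 1 \<Longrightarrow> norm (w z) < 1" and w0: "w 0 = 0"
  shows "norm (coeff w 1) \<le> 1 \<and> norm (coeff w 2) \<le> 1 - (norm (coeff w 1))^2 \<and>
     norm (coeff w 3) \<le> 1 - (norm (coeff w 1))^2 - (norm (coeff w 2))^2 / (1 + norm (coeff w 1))"
proof -
  obtain u where uh: "u holomorphic_on ball 0 1" and ue: "\<And>z. norm z < 1 \<Longrightarrow> w z = z * u z"
    and ub: "\<And>z. norm z < 1 \<Longrightarrow> norm (u z) \<le> 1" and u0: "u 0 = deriv w 0"
    using schwarz_quot[OF wh w0 wb] by blast
  have c1: "coeff w 1 = u 0" using coeff_shift[OF wh uh ue, of 0] coeff_01 by simp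
  have c2: "coeff w 2 = deriv u 0" using coeff_shift[OF wh uh ue, of 1] coeff_01 by (simp add: numeral_2_eq_2)
  have c3: "coeff w 3 = coeff u 2" using coeff_shift[OF wh uh ue, of 2] by (simp only: Suc_numeral) simp
  define a where "a = u 0"
  note spc = SP_closed[OF uh ub]
  have sp: "norm (deriv u 0) \<le> 1 - (norm a)^2" using spc[THEN conjunct1] by (simp add: a_def)
  have cst: "\<forall>z. norm z < 1 \<longrightarrow> u z = u 0" if "\<exists>z. norm z < 1 \<and> norm (u z) = 1"
    using spc[THEN conjunct2] that by (rule mp)
  have a1: "norm a \<le> 1" using ub[of 0] by (simp add: a_def)
  show ?thesis
  proof (cases "norm a = 1")
    case True
    have "\<exists>z. norm z < 1 \<and> norm (u z) = 1" using True by (intro exI[of _ 0]) (simp add: a_def)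
    then have uc: "\<And>z. norm z < 1 \<Longrightarrow> u z = a" using cst unfolding a_def by blast
    have "coeff u 2 = coeff (\<lambda>_. a) 2"
      unfolding coeff_def
      by (rule arg_cong[where f="\<lambda>x. x / _"], rule higher_deriv_cong_ev)
         (use ev_ball uc in \<open>auto elim!: eventually_mono\<close>)
    then have "coeff u 2 = 0" by (simp add: coeff_eq[OF has_fps_expansion_const])
    then show ?thesis using sp True c1 c2 c3 by (simp add: a_def)
  next
    case False
    then have a1': "norm a < 1" using a1 by simp
    have us: "norm (u z) < 1" if "norm z < 1" for z
    proof (rule ccontr)
      assume "\<not> norm (u z) < 1"
      then have "norm (u z) = 1" using ub[OF that] by simp
      then have "u 0 = u z" using cst[of] that by (metis)
      then show False using False \<open>norm (u z) = 1\<close> by (simp add: a_def)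
    qed
    define v where "v z = (u z - a) / (1 - cnj a * u z)" for z
    have den: "1 - cnj a * u z \<noteq> 0" if "norm z < 1" for z
    proof -
      have "norm a * norm (u z) \<le> norm a" using us[OF that] by (simp add: mult_left_le)
      then have "norm (cnj a * u z) < 1" using a1' by (simp add: norm_mult)
      then show ?thesis by auto
    qed
    have vh: "v holomorphic_on ball 0 1" unfolding v_def
      using den by (intro holomorphic_intros uh) auto
    have v0: "v 0 = 0" by (simp add: v_def a_def)
    have vb: "norm (v z) < 1" if "norm z < 1" for z
      unfolding v_def using mobius_lt[OF a1' us[OF that]] .
    obtain t where th: "t holomorphic_on ball 0 1" and te': "\<forall>z. norm z < 1 \<longrightarrow> v z = z * t z"
      and tb': "\<forall>z. norm z < 1 \<longrightarrow> norm (t z) \<le> 1"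
      using schwarz_quot_ex[OF vh v0 vb] by blast
    have te: "\<And>z. norm z < 1 \<Longrightarrow> v z = z * t z" using te' by blast
    have tb: "\<And>z. norm z < 1 \<Longrightarrow> norm (t z) \<le> 1" using tb' by blast
    have spt: "norm (deriv t 0) \<le> 1 - (norm (t 0))^2" using SP_closed[OF th tb, THEN conjunct1] .
    define U where "U = fps_expansion u 0"
    define V where "V = fps_expansion v 0"
    have hU: "u has_fps_expansion U" unfolding U_def using uh by (rule hfe)
    have hV: "v has_fps_expansion V" unfolding V_def using vh by (rule hfe)
    have VU: "V * (1 - fps_const (cnj a) * U) = U - fps_const a"
    proof (rule fps_eq_from_fun)
      show "(\<lambda>z. v z * (1 - cnj a * u z)) has_fps_expansion V * (1 - fps_const (cnj a) * U)"
        by (intro fps_expansion_intros hU hV)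
      show "(\<lambda>z. u z - a) has_fps_expansion U - fps_const a"
        by (intro fps_expansion_intros hU)
      show "eventually (\<lambda>z. v z * (1 - cnj a * u z) = u z - a) (nhds 0)"
        using ev_ball by eventually_elim (use den in \<open>simp add: v_def\<close>)
    qed
    have U0: "fps_nth U 0 = a" "fps_nth U 1 = coeff w 2" "fps_nth U 2 = coeff w 3"
      using coeff_eq[OF hU, of 0] coeff_01(1)[of u] coeff_eq[OF hU, of 1] coeff_01(2)[of u] c2
        coeff_eq[OF hU, of 2] c3 by (simp_all add: a_def)
    have V0: "fps_nth V 0 = 0" "fps_nth V 1 = t 0" "fps_nth V 2 = deriv t 0"
      using coeff_eq[OF hV, of 0] coeff_01(1)[of v] v0
        coeff_eq[OF hV, of 1] coeff_shift[OF vh th te, of 0] coeff_01(1)[of t]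
        coeff_eq[OF hV, of 2] coeff_shift[OF vh th te, of 1] coeff_01(2)[of t]
      by (simp_all add: numeral_2_eq_2)
    have "fps_nth (V * (1 - fps_const (cnj a) * U)) n = fps_nth (U - fps_const a) n" for n
      using VU by simp
    note x = this[of 1, unfolded mnth] this[of 2, unfolded mnth]
    have eq1: "t 0 * (1 - cnj a * a) = coeff w 2" using x(1) U0 V0 by simp
    have eq2: "deriv t 0 * (1 - cnj a * a) - t 0 * cnj a * coeff w 2 = coeff w 3" using x(2) U0 V0 by (simp add: algebra_simps)
    define x where "x = norm a"
    define D where "D = 1 - x^2"
    define r where "r = norm (t 0)"
    have x1: "0 \<le> x" "x < 1" using a1' by (simp_all add: x_def)
    have Dp: "D > 0" using x1 by (simp add: D_def abs_square_less_1)
    have caa: "1 - cnj a * a = of_real D"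
      using complex_norm_square[of a] by (simp add: D_def x_def mult.commute)
    have "t 0 * of_real D = coeff w 2" using eq1 caa by simp
    then have "norm (coeff w 2) = norm (t 0) * norm (of_real D :: complex)" by (metis norm_mult)
    then have y: "norm (coeff w 2) = r * D" using Dp by (simp add: r_def)
    have "norm (coeff w 3) \<le> norm (deriv t 0 * (1 - cnj a * a)) + norm (t 0 * cnj a * coeff w 2)"
      using eq2 norm_triangle_ineq4 by metis
    also have "\<dots> = norm (deriv t 0) * D + r * x * (r * D)"
      using Dp by (simp add: caa norm_mult r_def x_def y)
    also have "\<dots> \<le> (1 - r^2) * D + r * x * (r * D)"
      using spt Dp by (simp add: r_def)
    finally have c3b: "norm (coeff w 3) \<le> (1 - r^2) * D + r * x * (r * D)" .
    have "(norm (coeff w 2))^2 / (1 + x) = r^2 * D * (1 - x)"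
      using x1 by (simp add: y D_def field_simps power2_eq_square)
    then have goal3: "norm (coeff w 3) \<le> 1 - x^2 - (norm (coeff w 2))^2 / (1 + x)"
      using c3b by (simp add: D_def algebra_simps power2_eq_square)
    have "norm (coeff w 2) \<le> 1 - x^2" using sp c2 by (simp add: x_def)
    then show ?thesis using goal3 c1 x1 by (simp add: x_def a_def)
  qed
qed

lemma real_ineq:
  fixes x y z :: real
  assumes "0 \<le> x" "x \<le> 1" "0 \<le> y" "y \<le> 1 - x^2" "z \<le> 1 - x^2 - y^2/(1+x)"
  shows "5/36 * x^4 + x * z / 3 + y^2/4 \<le> 1/4"
proof -
  have xz: "x * z \<le> x * (1 - x^2 - y^2/(1+x))" using assms by (intro mult_left_mono) auto
  have Y: "y^2 \<le> (1 - x^2)^2" using assms by (intro power_mono) auto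
  have "x * (1 - x^2 - y^2/(1+x)) = x * (1 - x^2) - x * y^2 / (1+x)" using assms by (simp add: field_simps)
  have key: "5/36 * x^4 + x * (1 - x^2 - y^2/(1+x)) / 3 + y^2/4 \<le> 1/4"
  proof -
    have p: "1 + x > 0" using assms by simp
    have "36 * (1+x) * (5/36 * x^4 + x * (1 - x^2 - y^2/(1+x)) / 3 + y^2/4)
        = 5 * x^4 * (1+x) + 12 * x * (1 - x^2) * (1+x) + 3 * y^2 * (3 - x)"
      using p by (simp add: field_simps)
    also have "\<dots> \<le> 5 * x^4 * (1+x) + 12 * x * (1 - x^2) * (1+x) + 3 * (1 - x^2)^2 * (3 - x)"
      using Y assms by (intro add_left_mono mult_right_mono mult_left_mono) auto
    also have "\<dots> = 36 * (1+x) * (1/4) - (1+x) * 2 * x^2 * (3 - x^2)"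
      by (simp add: algebra_simps power2_eq_square power4_eq_xxxx)
    also have "\<dots> \<le> 36 * (1+x) * (1/4)"
    proof -
      have "x^2 \<le> 1" using assms by (simp add: power_le_one)
      then have "(1+x) * 2 * x^2 * (3 - x^2) \<ge> 0" using assms by (intro mult_nonneg_nonneg) auto
      then show ?thesis by linarith
    qed
    finally show ?thesis using p by simp
  qed
  have "x * z / 3 \<le> x * (1 - x^2 - y^2/(1+x)) / 3" using xz by (simp add: divide_right_mono)
  then show ?thesis using key by linarith
qed

lemma cplx_ineq:
  fixes c1 c2 c3 :: complex
  assumes "norm c1 \<le> 1" "norm c2 \<le> 1 - (norm c1)^2"
    "norm c3 \<le> 1 - (norm c1)^2 - (norm c2)^2 / (1 + norm c1)"
  shows "norm (c1 * (c1^3/9 + c1*c2/2 + c3/3) - ((c1^2 + c2)/2)^2) \<le> 1/4"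
proof -
  have "c1 * (c1^3/9 + c1*c2/2 + c3/3) - ((c1^2 + c2)/2)^2 = c1 * c3 / 3 - (5/36 * c1^4 + c2^2/4)"
    by (simp add: field_simps power2_eq_square power4_eq_xxxx power3_eq_cube)
  also have "norm \<dots> \<le> norm (c1 * c3 / 3) + norm (5/36 * c1^4 + c2^2/4)" by (rule norm_triangle_ineq4)
  also have "\<dots> \<le> norm c1 * norm c3 / 3 + (5/36 * (norm c1)^4 + (norm c2)^2/4)"
  proof -
    have "norm (5/36 * c1^4 + c2^2/4) \<le> norm (5/36 * c1^4) + norm (c2^2/4)" by (rule norm_triangle_ineq)
    also have "\<dots> = 5/36 * (norm c1)^4 + (norm c2)^2/4" by (simp add: norm_mult norm_divide norm_power)
    finally show ?thesis by (simp add: norm_mult norm_divide)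
  qed
  also have "\<dots> \<le> 1/4"
    using real_ineq[of "norm c1" "norm c2" "norm c3"] assms by simp
  finally show ?thesis .
qed

lemma hankel_bound:
  assumes "f \<in> S_rho"
  shows "cmod (coeff f 2 * coeff f 4 - (coeff f 3)^2) \<le> 1/4"
proof -
  have fh: "f holomorphic_on ball 0 1" and fi: "inj_on f (ball 0 1)" and f0: "f 0 = 0" and f1: "deriv f 0 = 1"
    and sub: "subordinate (logderiv_quot f) (\<lambda>z. 1 + arsinh z)"
    using assms by (auto simp: S_rho_def)
  obtain w where wh: "w holomorphic_on ball 0 1" and wi: "w ` ball 0 1 \<subseteq> ball 0 1" and w0: "w 0 = 0"
    and we: "\<forall>z\<in>ball 0 1. logderiv_quot f z = 1 + arsinh (w z)"
    using sub unfolding subordinate_def by blast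
  have wb: "norm (w z) < 1" if "norm z < 1" for z
  proof -
    have "z \<in> ball 0 1" using that by simp
    then have "w z \<in> ball 0 1" using wi by blast
    then show ?thesis by simp
  qed
  have eq: "z * deriv f z = f z * (1 + arsinh (w z))" if z: "norm z < 1" for z
  proof (cases "z = 0")
    case True then show ?thesis by (simp add: f0)
  next
    case False
    have "f z \<noteq> 0"
    proof
      assume "f z = 0"
      then have "f z = f 0" by (simp add: f0)
      then have "z = 0" using fi z by (auto simp: inj_on_def)
      then show False using False by simp
    qed
    moreover have "z * deriv f z / f z = 1 + arsinh (w z)"
    proof -
      have "z \<in> ball 0 1" using z by simp
      then have "logderiv_quot f z = 1 + arsinh (w z)" using we by blast
      then show ?thesis using False by (simp add: logderiv_quot_def)
    qed
    ultimately show ?thesis by (simp add: field_simps)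
  qed
  have cr: "coeff f 2 = coeff w 1 \<and> coeff f 3 = ((coeff w 1)^2 + coeff w 2)/2
     \<and> coeff f 4 = (coeff w 1)^3/9 + coeff w 1 * coeff w 2/2 + coeff w 3/3"
    by (rule coeff_rel[OF wh wb w0 fh f0 f1 eq])
  have cb: "norm (coeff w 1) \<le> 1 \<and> norm (coeff w 2) \<le> 1 - (norm (coeff w 1))^2 \<and>
     norm (coeff w 3) \<le> 1 - (norm (coeff w 1))^2 - (norm (coeff w 2))^2 / (1 + norm (coeff w 1))"
    by (rule coef_bounds[OF wh wb w0])
  have "coeff f 2 * coeff f 4 - (coeff f 3)^2 = coeff w 1 * ((coeff w 1)^3/9 + coeff w 1 * coeff w 2/2 + coeff w 3/3) - (((coeff w 1)^2 + coeff w 2)/2)^2"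
    using cr by (simp only:)
  then show ?thesis using cplx_ineq[of "coeff w 1" "coeff w 2" "coeff w 3"] cb by (simp only:)
qed

definition qq :: "complex \<Rightarrow> complex" where
  "qq z = (if z = 0 then deriv arsinh 0 else (arsinh z - arsinh 0) / (z - 0))"

lemma qq_holo: "qq holomorphic_on ball 0 1"
proof -
  have "(0::complex) \<in> interior (ball 0 1)" by (simp add: interior_open)
  then show ?thesis unfolding qq_def[abs_def] by (rule pole_lemma[OF arsinh_holo])
qed

lemma qq_mult: "z * qq z = arsinh z"
  by (simp add: qq_def)

definition phi0 :: "complex \<Rightarrow> complex" where
  "phi0 = (SOME g. \<forall>x\<in>ball 0 1. (g has_field_derivative qq x / 2) (at x within ball 0 1))"

lemma phi0_deriv: "norm x < 1 \<Longrightarrow> (phi0 has_field_derivative qq x / 2) (at x)"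
proof -
  have "(\<lambda>z. qq z / 2) holomorphic_on ball 0 1" by (intro holomorphic_intros qq_holo) auto
  then obtain g where g: "\<And>x. x \<in> ball 0 1 \<Longrightarrow> (g has_field_derivative qq x / 2) (at x within ball 0 1)"
    using holomorphic_convex_primitive'[OF convex_ball open_ball] by blast
  then have "\<exists>g. \<forall>x\<in>ball 0 1. (g has_field_derivative qq x / 2) (at x within ball 0 1)" by blast
  then have "\<forall>x\<in>ball 0 1. (phi0 has_field_derivative qq x / 2) (at x within ball 0 1)"
    unfolding phi0_def by (rule someI_ex)
  moreover assume "norm x < 1"
  ultimately show ?thesis by (simp add: at_within_open[of _ "ball 0 1"])
qed

definition phi :: "complex \<Rightarrow> complex" where "phi z = phi0 z - phi0 0"

lemma phi_deriv: "norm x < 1 \<Longrightarrow> (phi has_field_derivative qq x / 2) (at x)"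
  unfolding phi_def[abs_def] by (auto intro!: derivative_eq_intros phi0_deriv)

lemma phi_0: "phi 0 = 0" by (simp add: phi_def)

definition fext :: "complex \<Rightarrow> complex" where "fext z = z * exp (phi (z^2))"

lemma norm_sq_lt: "norm (z::complex) < 1 \<Longrightarrow> norm (z^2) < 1"
  by (simp add: norm_power power_less_one_iff abs_square_less_1)

lemma fext_deriv: assumes "norm z < 1"
  shows "(fext has_field_derivative exp (phi (z^2)) * (1 + arsinh (z^2))) (at z)"
proof -
  have d: "(phi has_field_derivative qq (z^2) / 2) (at (z^2))" using phi_deriv norm_sq_lt[OF assms] by blast
  have dz: "((\<lambda>x. x^2) has_field_derivative 2 * z) (at z)"
    by (auto intro!: derivative_eq_intros)
  have ch: "((\<lambda>x. phi (x^2)) has_field_derivative qq (z^2) / 2 * (2 * z)) (at z)"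
    by (rule DERIV_chain2[OF d dz])
  have ex: "((\<lambda>x. exp (phi (x^2))) has_field_derivative exp (phi (z^2)) * (qq (z^2) / 2 * (2 * z))) (at z)"
    by (rule DERIV_chain2[OF DERIV_exp ch])
  have "(fext has_field_derivative (1 * exp (phi (z^2)) + (exp (phi (z^2)) * (qq (z^2) / 2 * (2 * z))) * z)) (at z)"
    unfolding fext_def[abs_def] by (rule DERIV_mult[OF DERIV_ident ex])
  moreover have "1 * exp (phi (z^2)) + (exp (phi (z^2)) * (qq (z^2) / 2 * (2 * z))) * z = exp (phi (z^2)) * (1 + arsinh (z^2))"
    using qq_mult[of "z^2"] by (simp add: algebra_simps power2_eq_square)
  ultimately show ?thesis by simp
qed

lemma fext_holo: "fext holomorphic_on ball 0 1"
  unfolding holomorphic_on_open[OF open_ball]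
proof
  fix x :: complex assume "x \<in> ball 0 1"
  then have "norm x < 1" by simp
  then show "\<exists>f'. (fext has_field_derivative f') (at x)" using fext_deriv by blast
qed

definition LL :: "complex \<Rightarrow> complex" where "LL s = s + phi (exp (2 * s))"

lemma norm_exp2: "Re s < 0 \<Longrightarrow> norm (exp (2 * s)) < 1"
  by simp

lemma LL_deriv: assumes "Re s < 0" shows "(LL has_field_derivative (1 + arsinh (exp (2 * s)))) (at s)"
proof -
  have d: "(phi has_field_derivative qq (exp (2 * s)) / 2) (at (exp (2 * s)))"
    using phi_deriv norm_exp2[OF assms] by blast
  have e2: "((\<lambda>x. exp (2 * x)) has_field_derivative exp (2 * s) * 2) (at s)"
    by (auto intro!: derivative_eq_intros)
  have "(LL has_field_derivative (1 + qq (exp (2 * s)) / 2 * (exp (2 * s) * 2))) (at s)"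
    unfolding LL_def[abs_def] by (rule DERIV_add[OF DERIV_ident DERIV_chain2[OF d e2]])
  moreover have "1 + qq (exp (2 * s)) / 2 * (exp (2 * s) * 2) = 1 + arsinh (exp (2 * s))"
    using qq_mult[of "exp (2 * s)"] by (simp add: algebra_simps)
  ultimately show ?thesis by simp
qed

lemma LL_inj: assumes a: "Re a < 0" and b: "Re b < 0" and e: "LL a = LL b" shows "a = b"
proof (rule ccontr)
  assume ne: "a \<noteq> b"
  define d where "d = b - a"
  have d0: "d \<noteq> 0" using ne by (simp add: d_def)
  define G where "G t = Re (cnj d * LL (a + of_real t * d))" for t :: real
  have "G 0 < G 1"
  proof (rule DERIV_pos_imp_increasing[of 0 1 G])
    fix t :: real assume t: "0 \<le> t" "t \<le> 1"
    define s where "s = a + of_real t * d"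
    have "Re s = (1 - t) * Re a + t * Re b" by (simp add: s_def d_def algebra_simps)
    also have "\<dots> < 0"
    proof (cases "t = 0")
      case True then show ?thesis using a by simp
    next
      case False
      then have "t * Re b < 0" using t b by (simp add: mult_pos_neg)
      moreover have "(1 - t) * Re a \<le> 0" using t a by (simp add: mult_nonneg_nonpos)
      ultimately show ?thesis by linarith
    qed
    finally have rs: "Re s < 0" .
    have K: "((\<lambda>w. cnj d * LL (a + w * d)) has_field_derivative cnj d * ((1 + arsinh (exp (2 * s))) * d)) (at (of_real t))"
    proof -
      have "((\<lambda>w. a + w * d) has_field_derivative d) (at (of_real t))" by (auto intro!: derivative_eq_intros)
      from DERIV_chain2[OF LL_deriv[OF rs[unfolded s_def]] this]
      have "((\<lambda>w. LL (a + w * d)) has_field_derivative (1 + arsinh (exp (2 * s))) * d) (at (of_real t))"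
        by (simp add: s_def)
      then show ?thesis by (rule DERIV_cmult)
    qed
    have V: "((\<lambda>x. cnj d * LL (a + of_real x * d)) has_vector_derivative 1 * (cnj d * ((1 + arsinh (exp (2 * s))) * d))) (at t)"
      using field_vector_diff_chain_at[OF has_vector_derivative_of_real[OF DERIV_ident] K]
      by (simp add: o_def)
    have "(G has_field_derivative Re (1 * (cnj d * ((1 + arsinh (exp (2 * s))) * d)))) (at t)"
      unfolding G_def by (rule has_field_derivative_Re[OF V])
    moreover have "Re (1 * (cnj d * ((1 + arsinh (exp (2 * s))) * d))) = (norm d)^2 * Re (1 + arsinh (exp (2 * s)))"
    proof -
      have cd: "cnj d * d = of_real ((norm d)^2)" using complex_norm_square[of d] by (simp add: mult.commute)
      have "cnj d * ((1 + arsinh (exp (2 * s))) * d) = (cnj d * d) * (1 + arsinh (exp (2 * s)))"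
        by (simp only: mult.commute mult.left_commute mult.assoc)
      also have "\<dots> = of_real ((norm d)^2) * (1 + arsinh (exp (2 * s)))" by (simp only: cd)
      finally have "cnj d * ((1 + arsinh (exp (2 * s))) * d) = of_real ((norm d)^2) * (1 + arsinh (exp (2 * s)))" .
      then show ?thesis by (simp only: mult_1 times_complex.sel Re_complex_of_real Im_complex_of_real)
    qed
    moreover have "(norm d)^2 * Re (1 + arsinh (exp (2 * s))) > 0"
      using d0 Re_arsinh[OF norm_exp2[OF rs]] by simp
    ultimately show "\<exists>y. (G has_field_derivative y) (at t) \<and> y > 0" by auto
  qed simp
  moreover have "G 0 = G 1" using e by (simp add: G_def d_def)
  ultimately show False by simp
qed

lemma fext_zero: "fext z = 0 \<Longrightarrow> z = 0"
  by (simp add: fext_def)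

lemma fext_exp: "fext (exp s) = exp (LL s)"
proof -
  have "(exp s)^2 = exp (2 * s)" by (simp only: power2_eq_square exp_add[symmetric] mult_2)
  then show ?thesis by (simp only: fext_def LL_def exp_add)
qed

lemma fext_inj: "inj_on fext (ball 0 1)"
proof (rule inj_onI)
  fix z1 z2 :: complex assume z1: "z1 \<in> ball 0 1" and z2: "z2 \<in> ball 0 1" and e: "fext z1 = fext z2"
  show "z1 = z2"
  proof (cases "z1 = 0 \<or> z2 = 0")
    case True
    have f0: "fext 0 = 0" by (simp add: fext_def)
    from True show ?thesis
    proof
      assume h: "z1 = 0"
      then have "fext z2 = 0" using e f0 by simp
      then have "z2 = 0" by (rule fext_zero)
      then show ?thesis using h by simp
    next
      assume h: "z2 = 0"
      then have "fext z1 = 0" using e f0 by simp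
      then have "z1 = 0" by (rule fext_zero)
      then show ?thesis using h by simp
    qed
  next
    case False
    then have n1: "z1 \<noteq> 0" and n2: "z2 \<noteq> 0" by auto
    define s1 where "s1 = Ln z1"
    define s2 where "s2 = Ln z2"
    have es1: "exp s1 = z1" using n1 by (simp add: s1_def)
    have es2: "exp s2 = z2" using n2 by (simp add: s2_def)
    have r1: "Re s1 < 0" using n1 z1 by (simp add: s1_def ln_less_zero_iff)
    have r2: "Re s2 < 0" using n2 z2 by (simp add: s2_def ln_less_zero_iff)
    have "exp (LL s1) = exp (LL s2)" using e by (simp only: es1[symmetric] es2[symmetric] fext_exp)
    then obtain n :: int where n: "LL s1 = LL s2 + (of_int (2 * n) * pi) * \<i>" by (auto simp: exp_eq)
    define s3 where "s3 = s2 + (of_int (2 * n) * pi) * \<i>"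
    have "exp (2 * s3) = exp (2 * s2)"
      unfolding exp_eq by (rule exI[of _ "2 * n"]) (simp add: s3_def algebra_simps)
    then have l3: "LL s1 = LL s3" using n by (simp add: LL_def s3_def)
    have r3: "Re s3 < 0" using r2 by (simp add: s3_def)
    have "s1 = s3" by (rule LL_inj[OF r1 r3 l3])
    moreover have "exp s3 = exp s2" unfolding exp_eq by (rule exI[of _ n]) (simp add: s3_def)
    ultimately show ?thesis using es1 es2 by simp
  qed
qed

lemma fext_in: "fext \<in> S_rho"
proof -
  have f1: "deriv fext 0 = 1" using DERIV_imp_deriv[OF fext_deriv[of 0]] by (simp add: phi_0)
  have lq: "logderiv_quot fext z = 1 + arsinh (z^2)" if "norm z < 1" for z
  proof (cases "z = 0")
    case True then show ?thesis by (simp add: logderiv_quot_def)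
  next
    case False
    have "deriv fext z = exp (phi (z^2)) * (1 + arsinh (z^2))"
      using DERIV_imp_deriv[OF fext_deriv[OF that]] .
    then show ?thesis using False by (simp add: logderiv_quot_def fext_def)
  qed
  have "subordinate (logderiv_quot fext) (\<lambda>z. 1 + arsinh z)"
    unfolding subordinate_def
  proof (intro exI[of _ "\<lambda>z. z^2"] conjI ballI)
    show "(\<lambda>z. z^2) holomorphic_on ball 0 1" by (intro holomorphic_intros)
    show "(\<lambda>z::complex. z^2) ` ball 0 1 \<subseteq> ball 0 1" using norm_sq_lt by auto
    show "(0::complex)^2 = 0" by simp
    fix z :: complex assume "z \<in> ball 0 1"
    then show "logderiv_quot fext z = 1 + arsinh (z^2)" using lq by simp
  qed
  then show ?thesis using fext_holo fext_inj f1 by (simp add: S_rho_def fext_def)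
qed

lemma fext_coeffs: "cmod (coeff fext 2 * coeff fext 4 - (coeff fext 3)^2) = 1/4"
proof -
  have wh: "(\<lambda>z::complex. z^2) holomorphic_on ball 0 1" by (intro holomorphic_intros)
  have wb: "\<And>z::complex. norm z < 1 \<Longrightarrow> norm (z^2) < 1" by (rule norm_sq_lt)
  have eq: "z * deriv fext z = fext z * (1 + arsinh (z^2))" if "norm z < 1" for z
    using DERIV_imp_deriv[OF fext_deriv[OF that]] by (simp add: fext_def)
  have f1: "deriv fext 0 = 1" using DERIV_imp_deriv[OF fext_deriv[of 0]] by (simp add: phi_0)
  have cr: "coeff fext 2 = coeff (\<lambda>z. z^2) 1 \<and> coeff fext 3 = ((coeff (\<lambda>z. z^2) 1)^2 + coeff (\<lambda>z. z^2) 2)/2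
     \<and> coeff fext 4 = (coeff (\<lambda>z. z^2) 1)^3/9 + coeff (\<lambda>z. z^2) 1 * coeff (\<lambda>z. z^2) 2/2 + coeff (\<lambda>z. z^2) 3/3"
    by (rule coeff_rel[OF wh wb _ fext_holo _ f1 eq]) (simp_all add: fext_def)
  have hw: "(\<lambda>z::complex. z^2) has_fps_expansion fps_X ^ 2" by (rule has_fps_expansion_fps_X_power)
  have "coeff (\<lambda>z::complex. z^2) 1 = 0" "coeff (\<lambda>z::complex. z^2) 2 = 1" "coeff (\<lambda>z::complex. z^2) 3 = 0"
    using coeff_eq[OF hw] by simp_all
  then have a: "coeff fext 2 = 0" "coeff fext 4 = 0" "coeff fext 3 = 1/2" using cr by simp_all
  have "coeff fext 2 * coeff fext 4 - (coeff fext 3)^2 = - (1/4)" by (simp only: a) (simp add: power2_eq_square)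
  then show ?thesis by simp
qed

theorem theorem2p2:
  shows "(\<forall>f\<in>S_rho. cmod (coeff f 2 * coeff f 4 - (coeff f 3)^2) \<le> 1/4)
       \<and> (\<exists>f\<in>S_rho. cmod (coeff f 2 * coeff f 4 - (coeff f 3)^2) = 1/4)"
proof (intro conjI ballI)
  fix f assume "f \<in> S_rho"
  then show "cmod (coeff f 2 * coeff f 4 - (coeff f 3)^2) \<le> 1/4" by (rule hankel_bound)
next
  show "\<exists>f\<in>S_rho. cmod (coeff f 2 * coeff f 4 - (coeff f 3)^2) = 1/4"
    using fext_coeffs fext_in by (rule bexI[where x=fext])
qed

end
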